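(* Let $\alpha\in(0,1)\setminus\mathbb{Q}$. There is $\beta_0>0$ such that for every irrational $\beta\in(0,\beta_0)$ and every $p\in(0,1)$ the following holds. Let $i_1,i_2,\dots$ be i.i.d. random variables with $\mathbb{P}(i_n=1)=p$, $\mathbb{P}(i_n=2)=1-p$, and let $F_n=T_{i_1}\circ T_{i_2}\circ\dots\circ T_{i_n}$. Then almost surely $\lim_{n\to\infty}\mathrm{Leb}(F_n(\mathbb{S}))=0$.
   Context: $\mathbb{S}=\mathbb{R}/\mathbb{Z}$ with Lebesgue measure, points represented by $y\in[0,1)$. Let $\delta=1-\alpha$. $T_1(y)=y+\alpha \bmod 1$. $T_2$ is the double rotation $T_2(y)=y+\alpha+\beta\bmod 1$ if $y\le\delta$, and $T_2(y)=y+\alpha\bmod1$ if $y>\delta$. *)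

theory Defs
  imports "HOL-Probability.Probability"
begin

text \<open>Points of the circle R/Z are represented by y in [0,1); reduction mod 1 is frac.\<close>

definition T1 :: "real \<Rightarrow> real \<Rightarrow> real" where
  "T1 \<alpha> y = frac (y + \<alpha>)"

definition T2 :: "real \<Rightarrow> real \<Rightarrow> real \<Rightarrow> real" where
  "T2 \<alpha> \<beta> y = (if y \<le> 1 - \<alpha> then frac (y + \<alpha> + \<beta>) else frac (y + \<alpha>))"

text \<open>Choice of map: True means T1 (probability p), False means T2 (probability 1-p).\<close>
definition Tsel :: "real \<Rightarrow> real \<Rightarrow> bool \<Rightarrow> real \<Rightarrow> real" where
  "Tsel \<alpha> \<beta> b = (if b then T1 \<alpha> else T2 \<alpha> \<beta>)"

text \<open>F n \<omega> = T_{i_1} o ... o T_{i_n} with i_k encoded by \<omega> (k-1).\<close>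
fun Fcomp :: "real \<Rightarrow> real \<Rightarrow> nat \<Rightarrow> (nat \<Rightarrow> bool) \<Rightarrow> real \<Rightarrow> real" where
  "Fcomp \<alpha> \<beta> 0 \<omega> = id"
| "Fcomp \<alpha> \<beta> (Suc n) \<omega> = Fcomp \<alpha> \<beta> n \<omega> \<circ> Tsel \<alpha> \<beta> (\<omega> n)"

definition sel_space :: "real \<Rightarrow> (nat \<Rightarrow> bool) measure" where
  "sel_space p = PiM UNIV (\<lambda>_::nat. measure_pmf (bernoulli_pmf p))"

end

theory Submission
  imports Defs
begin



definition carc :: "real \<Rightarrow> real \<Rightarrow> real set" where
  "carc c L = frac ` {c..c+L}"

fun app :: "real \<Rightarrow> real \<Rightarrow> bool list \<Rightarrow> real set \<Rightarrow> real set" where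
  "app a b [] X = X"
| "app a b (x#xs) X = app a b xs (Tsel a b x ` X)"

lemma app_append: "app a b (w1 @ w2) X = app a b w2 (app a b w1 X)"
  by (induction w1 arbitrary: X) auto

lemma app_mono: "X \<subseteq> Y \<Longrightarrow> app a b w X \<subseteq> app a b w Y"
  by (induction w arbitrary: X Y) (auto simp del: app.simps simp: app.simps image_mono)

lemma arc_shift: "c' - c \<in> \<int> \<Longrightarrow> carc c' L = carc c L"
proof -
  assume h: "c' - c \<in> \<int>"
  then obtain k where k: "c' - c = of_int k" by (auto elim: Ints_cases)
  have "carc c' L = (\<lambda>x. frac (x + of_int k)) ` {c..c+L}"
  proof -
    have "{c'..c'+L} = (\<lambda>x. x + of_int k) ` {c..c+L}"
    proof (intro equalityI subsetI)
      fix y assume "y \<in> {c'..c'+L}"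
      then have "y - of_int k \<in> {c..c+L}" "y = (y - of_int k) + of_int k" using k by auto
      then show "y \<in> (\<lambda>x. x + of_int k) ` {c..c+L}" by blast
    qed (use k in auto)
    then show ?thesis by (simp only: carc_def image_image)
  qed
  also have "\<dots> = carc c L" unfolding carc_def by simp
  finally show ?thesis .
qed

lemma arc_shift_int: "carc (c + of_int k) L = carc c L"
  by (rule arc_shift) simp

lemma arc_frac: "carc (frac c) L = carc c L"
  by (rule arc_shift) (simp add: frac_def)

lemma arc_mono: "L1 \<le> L2 \<Longrightarrow> carc c L1 \<subseteq> carc c L2"
  unfolding carc_def by (intro image_mono) auto

lemma arc_interval: "0 \<le> u \<Longrightarrow> u + L < 1 \<Longrightarrow> carc u L = {u..u+L}"
  unfolding carc_def
proof -
  assume "0 \<le> u" "u + L < 1"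
  then have "\<And>x. x \<in> {u..u+L} \<Longrightarrow> frac x = x" by (intro frac_eq_id) auto
  then have "frac ` {u..u + L} = id ` {u..u + L}" by (intro image_cong) auto
  then show "frac ` {u..u + L} = {u..u + L}" by simp
qed

lemma T1_arc: "Tsel a b True ` carc c L = carc (c + a) L"
proof -
  have "Tsel a b True ` carc c L = (\<lambda>x. frac (frac x + a)) ` {c..c+L}"
    unfolding carc_def Tsel_def T1_def by (simp add: image_image)
  also have "\<dots> = (\<lambda>x. frac (x + a)) ` {c..c+L}"
  proof (intro image_cong refl)
    fix x :: real
    have "frac x + a = (x + a) + of_int (- \<lfloor>x\<rfloor>)" by (simp add: frac_def)
    then show "frac (frac x + a) = frac (x + a)" by (simp only: frac_add_of_int_right)
  qed
  also have "\<dots> = carc (c + a) L"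
  proof -
    have "{c + a..c + a + L} = (\<lambda>x. x + a) ` {c..c+L}"
    proof (intro equalityI subsetI)
      fix y assume "y \<in> {c + a..c + a + L}"
      then have "y - a \<in> {c..c+L}" "y = (y - a) + a" by auto
      then show "y \<in> (\<lambda>x. x + a) ` {c..c+L}" by blast
    qed auto
    then show ?thesis by (simp only: carc_def image_image)
  qed
  finally show ?thesis .
qed

lemma T1_pow_arc: "app a b (replicate m True) (carc c L) = carc (c + real m * a) L"
proof (induction m arbitrary: c)
  case 0 then show ?case by simp
next
  case (Suc m)
  have "app a b (replicate (Suc m) True) (carc c L) = app a b (replicate m True) (carc (c + a) L)"
    by (simp add: T1_arc)
  also have "\<dots> = carc (c + real (Suc m) * a) L" using Suc by (simp add: algebra_simps)
  finally show ?case .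
qed

lemma density:
  fixes \<theta> c lo hi :: real
  assumes "\<theta> \<notin> \<rat>" "0 \<le> lo" "lo < hi" "hi \<le> 1"
  shows "\<exists>m::nat. lo < frac (c + real m * \<theta>) \<and> frac (c + real m * \<theta>) < hi"
proof -
  define mid where "mid = (lo + hi) / 2"
  define e where "e = (hi - lo) / 2"
  have e: "e > 0" using assms by (simp add: e_def)
  have "0 \<le> frac (mid - frac c)" "frac (mid - frac c) \<le> 1" using frac_lt_1 less_imp_le by auto
  then obtain k where k: "k > 0" "\<bar>frac (real k * \<theta>) - frac (mid - frac c)\<bar> < e"
    using Kronecker_approx_1_explicit[OF assms(1) _ _ e] by blast
  define d where "d = frac (real k * \<theta>) - frac (mid - frac c)"
  have "frac (c + real k * \<theta>) = frac (mid + d)"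
  proof -
    have "(c + real k * \<theta>) - (mid + d) \<in> \<int>"
    proof -
      have "(c + real k * \<theta>) - (mid + d) = (c - frac c) + (real k * \<theta> - frac (real k * \<theta>))
            + (frac (mid - frac c) - (mid - frac c))"
        by (simp add: d_def algebra_simps)
      moreover have "c - frac c \<in> \<int>" "real k * \<theta> - frac (real k * \<theta>) \<in> \<int>"
          "frac (mid - frac c) - (mid - frac c) \<in> \<int>"
        by (auto simp: frac_def)
      ultimately show ?thesis by (metis Ints_add)
    qed
    then show ?thesis by (metis frac_add_int_left diff_add_cancel)
  qed
  moreover have dd: "\<bar>d\<bar> < e" using k(2) by (simp add: d_def)
  moreover have d2: "- e < d" "d < e" using dd by linarith+
  moreover have "0 \<le> mid + d" using d2 assms unfolding mid_def e_def by (simp add: field_simps)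
  moreover have "mid + d < 1" using d2 assms unfolding mid_def e_def by (simp add: field_simps)
  moreover have "mid + d \<in> {0..<1}" using calculation by simp
  ultimately have "frac (c + real k * \<theta>) = mid + d" by simp
  moreover have "lo < mid + d" using d2 assms unfolding mid_def e_def by (simp add: field_simps)
  moreover have "mid + d < hi" using d2 assms unfolding mid_def e_def by (simp add: field_simps)
  ultimately show ?thesis by (intro exI[of _ k]) auto
qed




lemma app_Un: "app a b w (X \<union> Y) = app a b w X \<union> app a b w Y"
  by (induction w arbitrary: X Y) (simp_all add: image_Un)

lemma arc_union:
  assumes "p - q - (t - a) \<in> \<int>" "0 \<le> a"
  shows "carc p a \<union> carc q b \<subseteq> carc (q + min 0 (t - a)) (max b t - min 0 (t - a))"
proof -
  have h: "p - (q + t - a) = p - q - (t - a)" by simp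
  from assms(1) have "p - (q + t - a) \<in> \<int>" by (simp only: h)
  then have "carc p a = carc (q + t - a) a" by (rule arc_shift)
  also have "\<dots> \<subseteq> carc (q + min 0 (t - a)) (max b t - min 0 (t - a))"
    unfolding carc_def by (intro image_mono) auto
  finally have 1: "carc p a \<subseteq> carc (q + min 0 (t - a)) (max b t - min 0 (t - a))" .
  have "carc q b \<subseteq> carc (q + min 0 (t - a)) (max b t - min 0 (t - a))"
    unfolding carc_def by (intro image_mono) auto
  with 1 show ?thesis by blast
qed

locale drs =
  fixes \<alpha> \<beta> :: real
  assumes a_pos: "0 < \<alpha>" and a_lt1: "\<alpha> < 1" and a_irr: "\<alpha> \<notin> \<rat>"
    and b_pos: "0 < \<beta>" and b_irr: "\<beta> \<notin> \<rat>"
    and b_small1: "4 * \<beta> < \<alpha>" and b_small2: "4 * \<beta> < 1 - \<alpha>"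
begin

lemma T2_low:
  assumes "0 \<le> x" "x + L \<le> 1 - \<alpha>"
  shows "Tsel \<alpha> \<beta> False ` {x..x+L} \<subseteq> carc (x + \<alpha> + \<beta>) L"
proof
  fix z assume "z \<in> Tsel \<alpha> \<beta> False ` {x..x+L}"
  then obtain y where y: "y \<in> {x..x+L}" "z = T2 \<alpha> \<beta> y" by (auto simp: Tsel_def)
  then have "z = frac (y + \<alpha> + \<beta>)" using assms by (auto simp: T2_def)
  moreover have "y + \<alpha> + \<beta> \<in> {x + \<alpha> + \<beta>..x + \<alpha> + \<beta> + L}" using y by auto
  ultimately show "z \<in> carc (x + \<alpha> + \<beta>) L" unfolding carc_def by blast
qed

lemma T2_high:
  assumes "1 - \<alpha> < x" "x + L < 1"
  shows "Tsel \<alpha> \<beta> False ` {x..x+L} \<subseteq> carc (x + \<alpha>) L"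
proof
  fix z assume "z \<in> Tsel \<alpha> \<beta> False ` {x..x+L}"
  then obtain y where y: "y \<in> {x..x+L}" "z = T2 \<alpha> \<beta> y" by (auto simp: Tsel_def)
  then have "z = frac (y + \<alpha>)" using assms by (auto simp: T2_def)
  moreover have "y + \<alpha> \<in> {x + \<alpha>..x + \<alpha> + L}" using y by auto
  ultimately show "z \<in> carc (x + \<alpha>) L" unfolding carc_def by blast
qed

lemma fracI_int: "x - frac x \<in> \<int>"
  by (simp add: frac_def)

lemma step:
  assumes "0 \<le> a" "0 \<le> b" "a < 1 - \<alpha>" "b < \<alpha>" "b < frac (p - q)" "frac (p - q) < 1 - a"
    and X: "X \<subseteq> carc p a \<union> carc q b"
  shows "\<exists>w r. app \<alpha> \<beta> w X \<subseteq> carc (p + r + \<beta>) a \<union> carc (q + r) b"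
proof -
  define D where "D = frac (p - q)"
  define lo where "lo = max 0 (D - \<alpha>)"
  define hi where "hi = min (1 - \<alpha> - a) (D - b)"
  have "lo < hi" using assms a_lt1 unfolding lo_def hi_def D_def by auto
  moreover have "0 \<le> lo" "hi \<le> 1" using assms a_pos unfolding lo_def hi_def by auto
  ultimately obtain m :: nat where m: "lo < frac (p + real m * \<alpha>)" "frac (p + real m * \<alpha>) < hi"
    using density[OF a_irr] by blast
  define x where "x = frac (p + real m * \<alpha>)"
  define y where "y = x - D + 1"
  have x0: "0 \<le> x" by (simp add: x_def)
  have xa: "x + a < 1 - \<alpha>" "D - \<alpha> < x" "x < D - b" using m unfolding x_def lo_def hi_def by auto
  have y1: "1 - \<alpha> < y" "y + b < 1" using xa unfolding y_def by auto
  have Y: "app \<alpha> \<beta> (replicate m True) X \<subseteq> carc (p + real m * \<alpha>) a \<union> carc (q + real m * \<alpha>) b"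
    using app_mono[OF X, of \<alpha> \<beta> "replicate m True"] by (simp add: app_Un T1_pow_arc)
  have e1: "carc (p + real m * \<alpha>) a = {x..x+a}"
  proof -
    have "x + a < 1" using xa a_pos by simp
    then show ?thesis using arc_frac[of "p + real m * \<alpha>" a] arc_interval[OF x0] unfolding x_def by simp
  qed
  have int1: "(q + real m * \<alpha>) - y \<in> \<int>"
  proof -
    have "(q + real m * \<alpha>) - y = ((p + real m * \<alpha>) - frac (p + real m * \<alpha>)) - ((p - q) - frac (p - q)) - 1"
      by (simp add: y_def x_def D_def)
    then show ?thesis using fracI_int by (metis Ints_1 Ints_diff)
  qed
  have e2: "carc (q + real m * \<alpha>) b = {y..y+b}"
    using arc_shift[OF int1, of b] arc_interval[of y b] y1 a_lt1 by simp
  have "app \<alpha> \<beta> (replicate m True @ [False]) X = Tsel \<alpha> \<beta> False ` app \<alpha> \<beta> (replicate m True) X"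
    by (simp add: app_append)
  also have "\<dots> \<subseteq> Tsel \<alpha> \<beta> False ` {x..x+a} \<union> Tsel \<alpha> \<beta> False ` {y..y+b}"
    using Y e1 e2 by auto
  also have "\<dots> \<subseteq> carc (x + \<alpha> + \<beta>) a \<union> carc (y + \<alpha>) b"
    using T2_low[OF x0, of a] T2_high[OF y1] xa by auto
  also have "carc (x + \<alpha> + \<beta>) a = carc (p + real (Suc m) * \<alpha> + \<beta>) a"
  proof (rule arc_shift)
    have "x + \<alpha> + \<beta> - (p + real (Suc m) * \<alpha> + \<beta>) = - ((p + real m * \<alpha>) - frac (p + real m * \<alpha>))"
      by (simp add: x_def algebra_simps)
    then show "x + \<alpha> + \<beta> - (p + real (Suc m) * \<alpha> + \<beta>) \<in> \<int>" using fracI_int by (metis Ints_minus)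
  qed
  also have "carc (y + \<alpha>) b = carc (q + real (Suc m) * \<alpha>) b"
  proof (rule arc_shift)
    have "y + \<alpha> - (q + real (Suc m) * \<alpha>) = - ((q + real m * \<alpha>) - y)"
      by (simp add: algebra_simps)
    then show "y + \<alpha> - (q + real (Suc m) * \<alpha>) \<in> \<int>" using int1 by (metis Ints_minus)
  qed
  finally show ?thesis by blast
qed

lemma walk:
  assumes "0 \<le> a" "0 \<le> b" "a < 1 - \<alpha>" "b < \<alpha>" and X: "X \<subseteq> carc p a \<union> carc q b"
    and Z: "\<forall>i<n. b < frac (p - q + real i * \<beta>) \<and> frac (p - q + real i * \<beta>) < 1 - a"
  shows "\<exists>w r. app \<alpha> \<beta> w X \<subseteq> carc (p + r + real n * \<beta>) a \<union> carc (q + r) b"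
  using Z
proof (induction n)
  case 0
  show ?case by (rule exI[of _ "[]"], rule exI[of _ 0]) (use X in simp)
next
  case (Suc n)
  then obtain w r where wr: "app \<alpha> \<beta> w X \<subseteq> carc (p + r + real n * \<beta>) a \<union> carc (q + r) b" by auto
  have "(p + r + real n * \<beta>) - (q + r) = p - q + real n * \<beta>" by simp
  moreover have pre: "b < frac (p - q + real n * \<beta>)" "frac (p - q + real n * \<beta>) < 1 - a"
    using Suc.prems by auto
  ultimately have z: "b < frac ((p + r + real n * \<beta>) - (q + r))" "frac ((p + r + real n * \<beta>) - (q + r)) < 1 - a"
    by (simp_all only:)
  obtain w' r' where w'r': "app \<alpha> \<beta> w' (app \<alpha> \<beta> w X) \<subseteq> carc (p + r + real n * \<beta> + r' + \<beta>) a \<union> carc (q + r + r') b"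
    using step[OF assms(1-4) z wr] by blast
  have "p + r + real n * \<beta> + r' + \<beta> = p + (r + r') + real (Suc n) * \<beta>" "q + r + r' = q + (r + r')"
    by (simp_all add: algebra_simps)
  with w'r' show ?case by (intro exI[of _ "w @ w'"] exI[of _ "r + r'"]) (simp add: app_append)
qed

end



context drs
begin

lemma splitP:
  assumes "0 < L" "L < 1" "0 \<le> a1" "a1 < a2" "a2 \<le> 1 - \<alpha>" "a2 \<le> L" "L - a1 \<le> \<alpha>"
  shows "\<exists>a w r. a1 < a \<and> a < a2 \<and> app \<alpha> \<beta> w (carc c L) \<subseteq> carc (c + r + \<beta>) a \<union> carc (c + a + r) (L - a)"
proof -
  obtain m :: nat where m: "1 - \<alpha> - a2 < frac (c + real m * \<alpha>)" "frac (c + real m * \<alpha>) < 1 - \<alpha> - a1"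
    using density[OF a_irr, of "1 - \<alpha> - a2" "1 - \<alpha> - a1" c] assms a_pos by auto
  define u where "u = frac (c + real m * \<alpha>)"
  define a where "a = 1 - \<alpha> - u"
  have u0: "0 \<le> u" by (simp add: u_def)
  have aa: "a1 < a" "a < a2" using m unfolding a_def u_def by auto
  have uL: "u + L < 1" using aa assms unfolding a_def by auto
  have e1: "carc (c + real m * \<alpha>) L = {u..u+L}"
    using arc_frac[of "c + real m * \<alpha>" L] arc_interval[OF u0 uL] unfolding u_def by simp
  have int1: "(c + real m * \<alpha>) - u \<in> \<int>" unfolding u_def by (rule fracI_int)
  have img: "Tsel \<alpha> \<beta> False ` {u..u+L} \<subseteq> carc (u + \<alpha> + \<beta>) a \<union> carc (u + a + \<alpha>) (L - a)"
  proof
    fix z assume "z \<in> Tsel \<alpha> \<beta> False ` {u..u+L}"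
    then obtain y where y: "y \<in> {u..u+L}" "z = T2 \<alpha> \<beta> y" by (auto simp: Tsel_def)
    show "z \<in> carc (u + \<alpha> + \<beta>) a \<union> carc (u + a + \<alpha>) (L - a)"
    proof (cases "y \<le> 1 - \<alpha>")
      case True
      then have "z = frac (y + \<alpha> + \<beta>)" "y + \<alpha> + \<beta> \<in> {u + \<alpha> + \<beta>..u + \<alpha> + \<beta> + a}"
        using y by (auto simp: T2_def a_def)
      then show ?thesis unfolding carc_def by blast
    next
      case False
      then have "z = frac (y + \<alpha>)" "y + \<alpha> \<in> {u + a + \<alpha>..u + a + \<alpha> + (L - a)}"
        using y by (auto simp: T2_def a_def)
      then show ?thesis unfolding carc_def by blast
    qed
  qed
  have "app \<alpha> \<beta> (replicate m True @ [False]) (carc c L) = Tsel \<alpha> \<beta> False ` {u..u+L}"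
    by (simp add: app_append T1_pow_arc e1)
  also have "\<dots> \<subseteq> carc (u + \<alpha> + \<beta>) a \<union> carc (u + a + \<alpha>) (L - a)" by (rule img)
  also have "carc (u + \<alpha> + \<beta>) a = carc (c + real (Suc m) * \<alpha> + \<beta>) a"
  proof (rule arc_shift)
    have "u + \<alpha> + \<beta> - (c + real (Suc m) * \<alpha> + \<beta>) = - ((c + real m * \<alpha>) - u)"
      by (simp add: algebra_simps)
    then show "u + \<alpha> + \<beta> - (c + real (Suc m) * \<alpha> + \<beta>) \<in> \<int>" using int1 by (metis Ints_minus)
  qed
  also have "carc (u + a + \<alpha>) (L - a) = carc (c + a + real (Suc m) * \<alpha>) (L - a)"
  proof (rule arc_shift)
    have "u + a + \<alpha> - (c + a + real (Suc m) * \<alpha>) = - ((c + real m * \<alpha>) - u)"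
      by (simp add: algebra_simps)
    then show "u + a + \<alpha> - (c + a + real (Suc m) * \<alpha>) \<in> \<int>" using int1 by (metis Ints_minus)
  qed
  finally show ?thesis using aa by blast
qed

lemma splitN:
  assumes "0 < L" "L < 1" "0 \<le> a1" "a1 < a2" "a2 \<le> \<alpha>" "a2 \<le> L" "L - a1 \<le> 1 - \<alpha>"
  shows "\<exists>a w r. a1 < a \<and> a < a2 \<and> app \<alpha> \<beta> w (carc c L) \<subseteq> carc (c + r) a \<union> carc (c + a + r + \<beta>) (L - a)"
proof -
  obtain m :: nat where m: "1 - a2 < frac (c + real m * \<alpha>)" "frac (c + real m * \<alpha>) < 1 - a1"
    using density[OF a_irr, of "1 - a2" "1 - a1" c] assms a_pos by auto
  define u where "u = frac (c + real m * \<alpha>)"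
  define a where "a = 1 - u"
  have u0: "0 \<le> u" "u < 1" by (simp_all add: u_def frac_lt_1)
  have aa: "a1 < a" "a < a2" using m unfolding a_def u_def by auto
  have e1: "carc (c + real m * \<alpha>) L = carc u L"
    using arc_frac[of "c + real m * \<alpha>" L] unfolding u_def by simp
  have int1: "(c + real m * \<alpha>) - u \<in> \<int>" unfolding u_def by (rule fracI_int)
  have img: "Tsel \<alpha> \<beta> False ` carc u L \<subseteq> carc (u + \<alpha>) a \<union> carc (u + a + \<alpha> + \<beta>) (L - a)"
  proof
    fix z assume "z \<in> Tsel \<alpha> \<beta> False ` carc u L"
    then obtain y where y: "y \<in> {u..u+L}" "z = T2 \<alpha> \<beta> (frac y)" by (auto simp: Tsel_def carc_def)
    show "z \<in> carc (u + \<alpha>) a \<union> carc (u + a + \<alpha> + \<beta>) (L - a)"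
    proof (cases "y < 1")
      case True
      then have fy: "frac y = y" using y u0 by (intro frac_eq_id) auto
      have "1 - \<alpha> < y" using y aa assms unfolding a_def by auto
      then have "z = frac (y + \<alpha>)" "y + \<alpha> \<in> {u + \<alpha>..u + \<alpha> + a}"
        using y fy True by (auto simp: T2_def a_def)
      then show ?thesis unfolding carc_def by blast
    next
      case False
      have "y < 2" using y u0 assms by auto
      then have fy: "frac y = y - 1" using False
        by (subst frac_unique_iff) auto
      have "y - 1 \<le> 1 - \<alpha>" using y aa assms unfolding a_def by auto
      then have "z = frac ((y - 1) + \<alpha> + \<beta>)" using y fy by (simp add: T2_def)
      also have "\<dots> = frac (y + \<alpha> + \<beta>)"
        using frac_add_of_int_right[of "y + \<alpha> + \<beta>" "-1"] by (simp add: algebra_simps)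
      finally have "z = frac (y + \<alpha> + \<beta>)" .
      moreover have "y + \<alpha> + \<beta> \<in> {u + a + \<alpha> + \<beta>..u + a + \<alpha> + \<beta> + (L - a)}"
        using y False unfolding a_def by auto
      ultimately show ?thesis unfolding carc_def by blast
    qed
  qed
  have "app \<alpha> \<beta> (replicate m True @ [False]) (carc c L) = Tsel \<alpha> \<beta> False ` carc u L"
    by (simp add: app_append T1_pow_arc e1)
  also have "\<dots> \<subseteq> carc (u + \<alpha>) a \<union> carc (u + a + \<alpha> + \<beta>) (L - a)" by (rule img)
  also have "carc (u + \<alpha>) a = carc (c + real (Suc m) * \<alpha>) a"
  proof (rule arc_shift)
    have "u + \<alpha> - (c + real (Suc m) * \<alpha>) = - ((c + real m * \<alpha>) - u)"
      by (simp add: algebra_simps)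
    then show "u + \<alpha> - (c + real (Suc m) * \<alpha>) \<in> \<int>" using int1 by (metis Ints_minus)
  qed
  also have "carc (u + a + \<alpha> + \<beta>) (L - a) = carc (c + a + real (Suc m) * \<alpha> + \<beta>) (L - a)"
  proof (rule arc_shift)
    have "u + a + \<alpha> + \<beta> - (c + a + real (Suc m) * \<alpha> + \<beta>) = - ((c + real m * \<alpha>) - u)"
      by (simp add: algebra_simps)
    then show "u + a + \<alpha> + \<beta> - (c + a + real (Suc m) * \<alpha> + \<beta>) \<in> \<int>" using int1 by (metis Ints_minus)
  qed
  finally show ?thesis using aa by blast
qed

end



lemma frac_sub_small:
  assumes "L < frac x" "0 \<le> a" "a < L"
  shows "L - a < frac (x - a) \<and> frac (x - a) < 1 - a"
proof -
  have "frac (x - a) = frac x - a"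
  proof (subst frac_unique_iff, intro conjI)
    show "x - a - (frac x - a) \<in> \<int>" by (simp add: frac_def)
  qed (use assms frac_lt_1[of x] in auto)
  then show ?thesis using assms frac_lt_1[of x] by auto
qed

lemma frac_add_small:
  assumes "L < frac (- x)" "0 \<le> a" "0 < L" "a < L"
  shows "a < frac (a + x) \<and> frac (a + x) < 1 - L + a"
proof -
  have "x \<notin> \<int>" using assms by (metis frac_eq_0_iff Ints_minus less_le_not_le frac_ge_0 le_less_trans frac_of_int)
  then have fx: "frac x = 1 - frac (- x)" by (simp add: frac_neg)
  have "frac (a + x) = a + frac x"
  proof (subst frac_unique_iff, intro conjI)
    show "a + x - (a + frac x) \<in> \<int>" by (simp add: frac_def)
  qed (use assms fx frac_lt_1[of "-x"] frac_ge_0[of "-x"] in auto)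
  moreover have "0 < frac x" using \<open>x \<notin> \<int>\<close> by simp
  ultimately show ?thesis using fx assms by auto
qed

context drs
begin

lemma coreP:
  assumes L: "0 < L" "L < 1" and J: "1 \<le> J" and t: "t = frac (real J * \<beta>)" "t \<le> L"
    and Z: "\<forall>i. 1 \<le> i \<and> i < J \<longrightarrow> L < frac (real i * \<beta>)"
    and A: "0 \<le> a1" "a1 < a2" "a2 \<le> 1 - \<alpha>" "a2 \<le> L" "L - a1 \<le> \<alpha>"
  shows "\<exists>a w c'. a1 < a \<and> a < a2 \<and> app \<alpha> \<beta> w (carc c L) \<subseteq> carc c' (max (L - a) t - min 0 (t - a))"
proof -
  obtain a w1 r where a: "a1 < a" "a < a2"
    and w1: "app \<alpha> \<beta> w1 (carc c L) \<subseteq> carc (c + r + \<beta>) a \<union> carc (c + a + r) (L - a)"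
    using splitP[OF L A] by blast
  define p where "p = c + r + \<beta>"
  define q where "q = c + a + r"
  have zone: "\<forall>i<J - 1. L - a < frac (p - q + real i * \<beta>) \<and> frac (p - q + real i * \<beta>) < 1 - a"
  proof (intro allI impI)
    fix i assume "i < J - 1"
    then have "L < frac (real (Suc i) * \<beta>)" using Z[rule_format, of "Suc i"] by simp
    moreover have "p - q + real i * \<beta> = real (Suc i) * \<beta> - a" by (simp add: p_def q_def algebra_simps)
    ultimately show "L - a < frac (p - q + real i * \<beta>) \<and> frac (p - q + real i * \<beta>) < 1 - a"
      using frac_sub_small[of L "real (Suc i) * \<beta>" a] a A by auto
  qed
  obtain w2 r2 where w2: "app \<alpha> \<beta> w2 (app \<alpha> \<beta> w1 (carc c L)) \<subseteq> carc (p + r2 + real (J - 1) * \<beta>) a \<union> carc (q + r2) (L - a)"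
    using walk[of a "L - a" "app \<alpha> \<beta> w1 (carc c L)" p q "J - 1"] w1 zone a A unfolding p_def q_def by auto
  have "(p + r2 + real (J - 1) * \<beta>) - (q + r2) - (t - a) = real J * \<beta> - frac (real J * \<beta>)"
    using J by (simp add: p_def q_def t of_nat_diff algebra_simps)
  then have "(p + r2 + real (J - 1) * \<beta>) - (q + r2) - (t - a) \<in> \<int>" by (simp add: frac_def)
  from arc_union[OF this, of "L - a"] a A
  have "carc (p + r2 + real (J - 1) * \<beta>) a \<union> carc (q + r2) (L - a)
        \<subseteq> carc (q + r2 + min 0 (t - a)) (max (L - a) t - min 0 (t - a))" by auto
  with w2 have "app \<alpha> \<beta> (w1 @ w2) (carc c L) \<subseteq> carc (q + r2 + min 0 (t - a)) (max (L - a) t - min 0 (t - a))"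
    unfolding app_append by blast
  then show ?thesis using a by blast
qed

lemma coreN:
  assumes L: "0 < L" "L < 1" and J: "1 \<le> J" and t: "t = frac (- (real J * \<beta>))" "t \<le> L"
    and Z: "\<forall>i. 1 \<le> i \<and> i < J \<longrightarrow> L < frac (- (real i * \<beta>))"
    and A: "0 \<le> a1" "a1 < a2" "a2 \<le> \<alpha>" "a2 \<le> L" "L - a1 \<le> 1 - \<alpha>"
  shows "\<exists>a w c'. a1 < a \<and> a < a2 \<and> app \<alpha> \<beta> w (carc c L) \<subseteq> carc c' (max (L - a) t - min 0 (t - a))"
proof -
  obtain a w1 r where a: "a1 < a" "a < a2"
    and w1: "app \<alpha> \<beta> w1 (carc c L) \<subseteq> carc (c + r) a \<union> carc (c + a + r + \<beta>) (L - a)"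
    using splitN[OF L A] by blast
  define p where "p = c + a + r + \<beta>"
  define q where "q = c + r"
  have w1': "app \<alpha> \<beta> w1 (carc c L) \<subseteq> carc p (L - a) \<union> carc q a" using w1 unfolding p_def q_def by blast
  have zone: "\<forall>i<J - 1. a < frac (p - q + real i * \<beta>) \<and> frac (p - q + real i * \<beta>) < 1 - (L - a)"
  proof (intro allI impI)
    fix i assume "i < J - 1"
    then have "L < frac (- (real (Suc i) * \<beta>))" using Z[rule_format, of "Suc i"] by simp
    moreover have "p - q + real i * \<beta> = a + real (Suc i) * \<beta>" by (simp add: p_def q_def algebra_simps)
    ultimately show "a < frac (p - q + real i * \<beta>) \<and> frac (p - q + real i * \<beta>) < 1 - (L - a)"
      using frac_add_small[of L "real (Suc i) * \<beta>" a] a A L by auto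
  qed
  obtain w2 r2 where w2: "app \<alpha> \<beta> w2 (app \<alpha> \<beta> w1 (carc c L)) \<subseteq> carc (p + r2 + real (J - 1) * \<beta>) (L - a) \<union> carc (q + r2) a"
    using walk[of "L - a" a "app \<alpha> \<beta> w1 (carc c L)" p q "J - 1"] w1' zone a A L by auto
  have "(q + r2) - (p + r2 + real (J - 1) * \<beta>) - (t - a) = - (real J * \<beta>) - frac (- (real J * \<beta>))"
    using J by (simp add: p_def q_def t of_nat_diff algebra_simps)
  then have "(q + r2) - (p + r2 + real (J - 1) * \<beta>) - (t - a) \<in> \<int>" by (simp add: frac_def)
  from arc_union[OF this, of "L - a"] a A
  have "carc (q + r2) a \<union> carc (p + r2 + real (J - 1) * \<beta>) (L - a)
        \<subseteq> carc (p + r2 + real (J - 1) * \<beta> + min 0 (t - a)) (max (L - a) t - min 0 (t - a))" by auto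
  with w2 have "app \<alpha> \<beta> (w1 @ w2) (carc c L) \<subseteq> carc (p + r2 + real (J - 1) * \<beta> + min 0 (t - a)) (max (L - a) t - min 0 (t - a))"
    unfolding app_append by blast
  then show ?thesis using a by blast
qed

end



lemma irr_mult: "\<theta> \<notin> \<rat> \<Longrightarrow> 1 \<le> (J::nat) \<Longrightarrow> real J * \<theta> \<notin> \<int>"
proof
  assume h: "\<theta> \<notin> \<rat>" "1 \<le> J" "real J * \<theta> \<in> \<int>"
  then have "real J * \<theta> \<in> \<rat>" using Ints_subset_Rats by blast
  moreover have "\<theta> = (real J * \<theta>) / real J" using h(2) by simp
  ultimately have "\<theta> \<in> \<rat>" by (metis Rats_divide Rats_of_nat)
  with h show False by blast
qed

lemma first_hit:
  fixes \<theta> :: real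
  assumes "\<theta> \<notin> \<rat>" "0 < L"
  shows "\<exists>J t g. 1 \<le> J \<and> t = frac (real J * \<theta>) \<and> 0 < t \<and> t \<le> L \<and> 0 < g \<and>
           (\<forall>i. 1 \<le> i \<and> i < J \<longrightarrow> L + g \<le> frac (real i * \<theta>))"
proof -
  obtain m :: nat where m: "0 < frac (0 + real m * \<theta>)" "frac (0 + real m * \<theta>) < min L 1"
    using density[OF assms(1), of 0 "min L 1" 0] assms by auto
  have m1: "1 \<le> m" using m by (cases m) auto
  define P where "P = (\<lambda>j::nat. 1 \<le> j \<and> frac (real j * \<theta>) \<le> L)"
  have Pm: "P m" using m m1 unfolding P_def by auto
  define J where "J = (LEAST j. P j)"
  have PJ: "P J" unfolding J_def by (rule LeastI[of P m, OF Pm])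
  have notP: "\<And>i. i < J \<Longrightarrow> \<not> P i" unfolding J_def by (rule not_less_Least)
  define G where "G = insert 1 ((\<lambda>i. frac (real i * \<theta>) - L) ` {1..<J})"
  have Gfin: "finite G" "G \<noteq> {}" unfolding G_def by auto
  define g where "g = Min G"
  have nh: "\<forall>i. 1 \<le> i \<and> i < J \<longrightarrow> L < frac (real i * \<theta>)"
  proof (intro allI impI)
    fix i assume "1 \<le> i \<and> i < J"
    then have "\<not> P i" "1 \<le> i" using notP by auto
    then show "L < frac (real i * \<theta>)" unfolding P_def by auto
  qed
  have gpos: "0 < g"
    unfolding g_def using Gfin nh by (subst Min_gr_iff) (auto simp: G_def)
  have gle: "\<forall>i. 1 \<le> i \<and> i < J \<longrightarrow> L + g \<le> frac (real i * \<theta>)"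
  proof (intro allI impI)
    fix i assume "1 \<le> i \<and> i < J"
    then have "frac (real i * \<theta>) - L \<in> G" unfolding G_def by auto
    then have "g \<le> frac (real i * \<theta>) - L" unfolding g_def using Gfin by simp
    then show "L + g \<le> frac (real i * \<theta>)" by simp
  qed
  have "0 < frac (real J * \<theta>)" using irr_mult[OF assms(1)] PJ unfolding P_def by simp
  then show ?thesis using PJ gpos gle unfolding P_def by blast
qed

lemma ell_bound:
  fixes t a L' M :: real
  assumes "t < a" "a \<le> M" "L' - t \<le> M"
  shows "max (L' - a) t - min 0 (t - a) \<le> M"
  using assms by (simp add: max_def min_def)

context drs
begin

lemma t_le_beta:
  assumes "1 \<le> J" "t = frac (real J * \<beta>)" "t \<le> L" "\<forall>i. 1 \<le> i \<and> i < J \<longrightarrow> L + g \<le> frac (real i * \<beta>)" "0 < g"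
  shows "t \<le> \<beta>"
proof (cases "J = 1")
  case True
  have "frac \<beta> = \<beta>" using b_pos b_small1 a_lt1 by (intro frac_eq_id) auto
  then show ?thesis using assms True by simp
next
  case False
  then have "L + g \<le> frac (real 1 * \<beta>)" using assms by auto
  moreover have "frac \<beta> = \<beta>" using b_pos b_small1 a_lt1 by (intro frac_eq_id) auto
  ultimately show ?thesis using assms by simp
qed

lemma UR:
  assumes L: "0 < L" "L < 1"
  shows "\<exists>r>0. \<forall>L'. L \<le> L' \<and> L' < L + r \<and> L' < 1 \<longrightarrow>
           (\<forall>c. \<exists>w c' l. l \<le> L - r \<and> app \<alpha> \<beta> w (carc c L') \<subseteq> carc c' l)"
proof -
  obtain Jp tp gp where P: "1 \<le> Jp" "tp = frac (real Jp * \<beta>)" "0 < tp" "tp \<le> L" "0 < gp"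
      "\<forall>i. 1 \<le> i \<and> i < Jp \<longrightarrow> L + gp \<le> frac (real i * \<beta>)"
    using first_hit[OF b_irr L(1)] by blast
  have bneg: "- \<beta> \<notin> \<rat>" using b_irr by (metis Rats_minus_iff)
  obtain Jn tn gn where N: "1 \<le> Jn" "tn = frac (real Jn * - \<beta>)" "0 < tn" "tn \<le> L" "0 < gn"
      "\<forall>i. 1 \<le> i \<and> i < Jn \<longrightarrow> L + gn \<le> frac (real i * - \<beta>)"
    using first_hit[OF bneg L(1)] by blast
  have tpb: "tp \<le> \<beta>" using t_le_beta[OF P(1,2,4,6,5)] .
  show ?thesis
  proof (cases "tp < L")
    case True
    define t where "t = tp"
    define m where "m = min t (min (L - t) (min gp \<beta>))"
    have m: "0 < m" "m \<le> t" "m \<le> L - t" "m \<le> gp" "m \<le> \<beta>"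
      using True P b_pos unfolding m_def t_def by auto
    define r where "r = m / 4"
    have r: "0 < r" "2 * r \<le> t" "2 * r \<le> L - t" "r \<le> gp" "r \<le> \<beta>"
      using m unfolding r_def by auto
    show ?thesis
    proof (intro exI[of _ r] conjI allI impI r(1))
      fix L' c assume L': "L \<le> L' \<and> L' < L + r \<and> L' < 1"
      have Z: "\<forall>i. 1 \<le> i \<and> i < Jp \<longrightarrow> L' < frac (real i * \<beta>)" using P(6) L' r by force
      have L'0: "0 < L'" using L' L by auto
      show "\<exists>w c' l. l \<le> L - r \<and> app \<alpha> \<beta> w (carc c L') \<subseteq> carc c' l"
      proof (cases "2 * t < L")
        case True
        define a1 where "a1 = max t (L' - \<alpha>)"
        define a2 where "a2 = min (L' - t) (1 - \<alpha>)"
        have t0: "0 < t" "t \<le> \<beta>" using P tpb unfolding t_def by auto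
        have A: "0 \<le> a1" "a1 < a2" "a2 \<le> 1 - \<alpha>" "a2 \<le> L'" "L' - a1 \<le> \<alpha>"
        proof -
          show "0 \<le> a1" unfolding a1_def using t0 by (simp add: le_max_iff_disj)
          show "a2 \<le> 1 - \<alpha>" unfolding a2_def by simp
          show "a2 \<le> L'" unfolding a2_def using t0 by (simp add: min_le_iff_disj)
          show "L' - a1 \<le> \<alpha>" unfolding a1_def by simp
          have "t < L' - t" "t < 1 - \<alpha>" "L' - \<alpha> < L' - t" "L' - \<alpha> < 1 - \<alpha>"
            using True L' t0 b_small1 b_small2 b_pos by linarith+
          then show "a1 < a2" unfolding a1_def a2_def by simp
        qed
        obtain a w c' where a: "a1 < a" "a < a2"
          and w: "app \<alpha> \<beta> w (carc c L') \<subseteq> carc c' (max (L' - a) t - min 0 (t - a))"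
        proof -
          have "L' < 1" "t \<le> L'" using L' P(4) unfolding t_def by auto
          from coreP[OF L'0 this(1) P(1) P(2)[folded t_def] this(2) Z A, where c=c] that show thesis by blast
        qed
        have "max (L' - a) t - min 0 (t - a) \<le> L - r"
          using a L' r unfolding a1_def a2_def by (intro ell_bound) auto
        then show ?thesis using w by blast
      next
        case False
        define a1 where "a1 = t"
        define a2 where "a2 = t + r"
        have t0: "0 < t" "t \<le> \<beta>" using P tpb unfolding t_def by auto
        have A: "0 \<le> a1" "a1 < a2" "a2 \<le> 1 - \<alpha>" "a2 \<le> L'" "L' - a1 \<le> \<alpha>"
          using False L' t0 b_small1 b_small2 b_pos r unfolding a1_def a2_def by linarith+
        obtain a w c' where a: "a1 < a" "a < a2"
          and w: "app \<alpha> \<beta> w (carc c L') \<subseteq> carc c' (max (L' - a) t - min 0 (t - a))"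
        proof -
          have "L' < 1" "t \<le> L'" using L' P(4) unfolding t_def by auto
          from coreP[OF L'0 this(1) P(1) P(2)[folded t_def] this(2) Z A, where c=c] that show thesis by blast
        qed
        have "max (L' - a) t - min 0 (t - a) \<le> L - r"
          using a L' r unfolding a1_def a2_def by (intro ell_bound) auto
        then show ?thesis using w by blast
      qed
    qed
  next
    case False
    then have tpL: "tp = L" using P by auto
    have tnL: "tn < L"
    proof (rule ccontr)
      assume "\<not> tn < L"
      then have "tn = L" using N by auto
      then have "frac (real Jp * \<beta>) = frac (- (real Jn * \<beta>))" using tpL P N by simp
      then have "real Jp * \<beta> - (- (real Jn * \<beta>)) = (real Jp * \<beta> - frac (real Jp * \<beta>)) - ((- (real Jn * \<beta>)) - frac (- (real Jn * \<beta>)))"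
        by simp
      then have "real Jp * \<beta> - (- (real Jn * \<beta>)) \<in> \<int>"
        using fracI_int by (metis Ints_diff)
      then have "real (Jp + Jn) * \<beta> \<in> \<int>" by (simp add: algebra_simps)
      with irr_mult[OF b_irr, of "Jp + Jn"] P(1) show False by simp
    qed
    have Lb: "L \<le> \<beta>" using tpL tpb by simp
    define t where "t = tn"
    define m where "m = min t (min (L - t) (min gn \<beta>))"
    have m: "0 < m" "m \<le> t" "m \<le> L - t" "m \<le> gn" "m \<le> \<beta>"
      using tnL N b_pos unfolding m_def t_def by auto
    define r where "r = m / 4"
    have r: "0 < r" "2 * r \<le> t" "2 * r \<le> L - t" "r \<le> gn" "r \<le> \<beta>"
      using m unfolding r_def by auto
    show ?thesis
    proof (intro exI[of _ r] conjI allI impI r(1))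
      fix L' c assume L': "L \<le> L' \<and> L' < L + r \<and> L' < 1"
      have Z: "\<forall>i. 1 \<le> i \<and> i < Jn \<longrightarrow> L' < frac (- (real i * \<beta>))" using N(6) L' r by force
      have L'0: "0 < L'" using L' L by auto
      have tdef: "t = frac (- (real Jn * \<beta>))" using N(2) unfolding t_def by simp
      define a1 where "a1 = t"
      define a2 where "a2 = t + r"
      have A: "0 \<le> a1" "a1 < a2" "a2 \<le> \<alpha>" "a2 \<le> L'" "L' - a1 \<le> 1 - \<alpha>"
        using L' N(3) Lb tnL b_small1 b_small2 b_pos r unfolding a1_def a2_def t_def by linarith+
      obtain a w c' where a: "a1 < a" "a < a2"
        and w: "app \<alpha> \<beta> w (carc c L') \<subseteq> carc c' (max (L' - a) t - min 0 (t - a))"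
      proof -
        have "L' < 1" "t \<le> L'" using L' N(4) unfolding t_def by auto
        from coreN[OF L'0 this(1) N(1) tdef this(2) Z A, where c=c] that show thesis by blast
      qed
      have "max (L' - a) t - min 0 (t - a) \<le> L - r"
        using a L' r unfolding a1_def a2_def by (intro ell_bound) auto
      then show "\<exists>w c' l. l \<le> L - r \<and> app \<alpha> \<beta> w (carc c L') \<subseteq> carc c' l" using w by blast
    qed
  qed
qed

end



context drs
begin

definition HH :: "real \<Rightarrow> real \<Rightarrow> bool" where
  "HH \<epsilon> L \<longleftrightarrow> (\<forall>c. \<exists>w c' l. l < \<epsilon> \<and> app \<alpha> \<beta> w (carc c L) \<subseteq> carc c' l)"

lemma HH_mono: assumes "L1 \<le> L2" "HH \<epsilon> L2" shows "HH \<epsilon> L1"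
  unfolding HH_def
proof
  fix c
  obtain w c' l where w: "l < \<epsilon>" "app \<alpha> \<beta> w (carc c L2) \<subseteq> carc c' l"
    using assms(2) unfolding HH_def by blast
  have "app \<alpha> \<beta> w (carc c L1) \<subseteq> app \<alpha> \<beta> w (carc c L2)" by (intro app_mono arc_mono assms(1))
  with w show "\<exists>w c' l. l < \<epsilon> \<and> app \<alpha> \<beta> w (carc c L1) \<subseteq> carc c' l" by blast
qed

lemma HH_small: assumes "L < \<epsilon>" shows "HH \<epsilon> L"
  unfolding HH_def
proof
  fix c
  show "\<exists>w c' l. l < \<epsilon> \<and> app \<alpha> \<beta> w (carc c L) \<subseteq> carc c' l"
    by (rule exI[of _ "[]"], rule exI[of _ c], rule exI[of _ L]) (simp add: assms)
qed

lemma Hall: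
  assumes eps: "0 < \<epsilon>" and L: "0 \<le> L" "L < 1"
  shows "HH \<epsilon> L"
proof (rule ccontr)
  assume nH: "\<not> HH \<epsilon> L"
  define S where "S = {L. 0 \<le> L \<and> L < 1 \<and> \<not> HH \<epsilon> L}"
  have LS: "L \<in> S" using nH L unfolding S_def by auto
  have bdd: "bdd_below S" unfolding S_def by (rule bdd_belowI[of _ 0]) auto
  define Ls where "Ls = Inf S"
  have Sge: "\<epsilon> \<le> x" if "x \<in> S" for x
  proof (rule ccontr)
    assume "\<not> \<epsilon> \<le> x"
    then have "HH \<epsilon> x" by (intro HH_small) simp
    with that show False unfolding S_def by simp
  qed
  have Ls_ge: "\<epsilon> \<le> Ls" unfolding Ls_def using LS Sge by (intro cInf_greatest) auto
  have Ls_le: "Ls \<le> L" unfolding Ls_def using LS bdd by (rule cInf_lower)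
  have Ls0: "0 < Ls" "Ls < 1" using Ls_ge Ls_le eps L by auto
  obtain r where r: "r > 0" "\<forall>L'. Ls \<le> L' \<and> L' < Ls + r \<and> L' < 1 \<longrightarrow>
           (\<forall>c. \<exists>w c' l. l \<le> Ls - r \<and> app \<alpha> \<beta> w (carc c L') \<subseteq> carc c' l)"
    using UR[OF Ls0] by blast
  have "Inf S < Ls + r" using r unfolding Ls_def by simp
  then have "\<exists>x\<in>S. x < Ls + r" using cInf_less_iff[of S "Ls + r"] LS bdd by blast
  then obtain L' where L': "L' \<in> S" "L' < Ls + r" by blast
  have L'ge: "Ls \<le> L'" unfolding Ls_def using L' bdd by (intro cInf_lower) auto
  have "HH \<epsilon> L'"
    unfolding HH_def
  proof
    fix c
    obtain w c' l where wl: "l \<le> Ls - r" "app \<alpha> \<beta> w (carc c L') \<subseteq> carc c' l"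
      using r(2) L' L'ge unfolding S_def by blast
    define l0 where "l0 = max l 0"
    have l0: "0 \<le> l0" "l0 < Ls" using wl r Ls0 unfolding l0_def by auto
    have "l0 \<notin> S" using l0 bdd unfolding Ls_def by (meson cInf_lower not_less)
    then have "HH \<epsilon> l0" using l0 Ls0 unfolding S_def by auto
    then obtain w' c'' l' where w': "l' < \<epsilon>" "app \<alpha> \<beta> w' (carc c' l0) \<subseteq> carc c'' l'"
      unfolding HH_def by blast
    have "app \<alpha> \<beta> (w @ w') (carc c L') \<subseteq> app \<alpha> \<beta> w' (carc c' l)"
      unfolding app_append using wl(2) by (rule app_mono)
    also have "\<dots> \<subseteq> app \<alpha> \<beta> w' (carc c' l0)"
      by (intro app_mono arc_mono) (simp add: l0_def)
    also have "\<dots> \<subseteq> carc c'' l'" by (rule w'(2))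
    finally show "\<exists>w c' l. l < \<epsilon> \<and> app \<alpha> \<beta> w (carc c L') \<subseteq> carc c' l" using w'(1) by blast
  qed
  with L' show False unfolding S_def by auto
qed

lemma T2_full: "Tsel \<alpha> \<beta> False ` {0..<1} \<subseteq> carc (\<alpha> + \<beta>) (1 - \<beta>)"
proof
  fix z assume "z \<in> Tsel \<alpha> \<beta> False ` {0..<1}"
  then obtain y where y: "0 \<le> y" "y < 1" "z = T2 \<alpha> \<beta> y" by (auto simp: Tsel_def)
  show "z \<in> carc (\<alpha> + \<beta>) (1 - \<beta>)"
  proof (cases "y \<le> 1 - \<alpha>")
    case True
    then have "z = frac (y + \<alpha> + \<beta>)" "y + \<alpha> + \<beta> \<in> {\<alpha> + \<beta>..\<alpha> + \<beta> + (1 - \<beta>)}"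
      using y b_small1 b_pos by (auto simp: T2_def)
    then show ?thesis unfolding carc_def by blast
  next
    case False
    then have "z = frac (y + \<alpha>)" "y + \<alpha> \<in> {\<alpha> + \<beta>..\<alpha> + \<beta> + (1 - \<beta>)}"
      using y b_small1 b_small2 b_pos by (auto simp: T2_def)
    then show ?thesis unfolding carc_def by blast
  qed
qed

lemma det:
  assumes "0 < \<epsilon>"
  shows "\<exists>w c l. l < \<epsilon> \<and> app \<alpha> \<beta> w {0..<1} \<subseteq> carc c l"
proof -
  have "HH \<epsilon> (1 - \<beta>)" by (rule Hall[OF assms]) (use b_pos b_small1 a_lt1 in auto)
  then obtain w c l where w: "l < \<epsilon>" "app \<alpha> \<beta> w (carc (\<alpha> + \<beta>) (1 - \<beta>)) \<subseteq> carc c l"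
    unfolding HH_def by blast
  have "app \<alpha> \<beta> (False # w) {0..<1} \<subseteq> app \<alpha> \<beta> w (carc (\<alpha> + \<beta>) (1 - \<beta>))"
    using app_mono[OF T2_full] by simp
  with w show ?thesis by blast
qed

end



lemma trans_sets: "S \<in> sets lebesgue \<Longrightarrow> (\<lambda>x::real. x + d) ` S \<in> sets lebesgue"
  using lebesgue_sets_translation[of S d] by (simp add: add.commute)

lemma trans_em: "emeasure lebesgue ((\<lambda>x::real. x + d) ` S) = emeasure lebesgue S"
  using emeasure_lebesgue_affine[of 1 d S] by (simp add: add.commute)

lemma frac_img:
  assumes S: "S \<in> sets lebesgue" "S \<subseteq> {0..<3}"
  shows "frac ` S \<in> sets lebesgue \<and> emeasure lebesgue (frac ` S) \<le> emeasure lebesgue (S::real set)"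
proof -
  define A where "A = (\<lambda>k::nat. S \<inter> {real k..<real k + 1})"
  have Asets: "A k \<in> sets lebesgue" for k unfolding A_def using S by auto
  have eq: "frac ` S = (\<Union>k<3. (\<lambda>x. x + (- real k)) ` A k)"
  proof (intro equalityI subsetI)
    fix y assume "y \<in> frac ` S"
    then obtain x where x: "x \<in> S" "y = frac x" by auto
    define k where "k = nat \<lfloor>x\<rfloor>"
    have "0 \<le> x" "x < 3" using x S by auto
    then have fl: "0 \<le> \<lfloor>x\<rfloor>" "\<lfloor>x\<rfloor> < 3" by (simp_all add: floor_less_iff)
    have k: "real k = of_int \<lfloor>x\<rfloor>" "k < 3" unfolding k_def
      by (simp only: of_nat_nat[OF fl(1)]) (simp only: nat_less_iff[OF fl(1)], use fl(2) in simp)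
    then have "x \<in> A k" using x unfolding A_def by (auto simp: k(1))
    moreover have "y = x + (- real k)" using x k by (simp add: frac_def)
    ultimately show "y \<in> (\<Union>k<3. (\<lambda>x. x + (- real k)) ` A k)" using k by blast
  next
    fix y assume "y \<in> (\<Union>k<3. (\<lambda>x. x + (- real k)) ` A k)"
    then obtain k x where kx: "x \<in> A k" "y = x + (- real k)" by auto
    then have "frac x = x - real k" unfolding A_def by (subst frac_unique_iff) auto
    then show "y \<in> frac ` S" using kx unfolding A_def by (auto intro!: image_eqI[of _ _ x])
  qed
  have tr: "(\<lambda>x. x + (- real k)) ` A k \<in> sets lebesgue" for k by (rule trans_sets[OF Asets])
  have tr': "(\<lambda>x. x - real k) ` A k \<in> sets lebesgue" for k using tr[of k] by simp
  have s1: "frac ` S \<in> sets lebesgue" unfolding eq by (intro sets.finite_UN finite_lessThan tr)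
  have "emeasure lebesgue (frac ` S) \<le> (\<Sum>k<3. emeasure lebesgue ((\<lambda>x. x + (- real k)) ` A k))"
    unfolding eq by (rule emeasure_subadditive_finite) (use tr tr' in auto)
  also have "\<dots> = (\<Sum>k<3. emeasure lebesgue (A k))" by (rule sum.cong[OF refl], rule trans_em)
  also have "\<dots> = emeasure lebesgue (\<Union>k<3. A k)"
  proof (rule sum_emeasure)
    show "disjoint_family_on A {..<3}"
      unfolding disjoint_family_on_def A_def by auto
  qed (use Asets in auto)
  also have "(\<Union>k<3. A k) = S"
  proof (intro equalityI subsetI)
    fix x assume "x \<in> S"
    then have "0 \<le> x" "x < 3" using S by auto
    then have fl: "0 \<le> \<lfloor>x\<rfloor>" "\<lfloor>x\<rfloor> < 3" by (simp_all add: floor_less_iff)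
    have "nat \<lfloor>x\<rfloor> < 3" by (simp only: nat_less_iff[OF fl(1)], use fl(2) in simp)
    moreover have "x \<in> A (nat \<lfloor>x\<rfloor>)" using \<open>x \<in> S\<close> fl unfolding A_def by auto
    ultimately
    show "x \<in> (\<Union>k<3. A k)" by blast
  qed (auto simp: A_def)
  finally show ?thesis using s1 by simp
qed

lemma Tsel_img:
  assumes ab: "0 \<le> a" "a < 1" "0 \<le> b" "b < 1" and Y: "Y \<in> sets lebesgue" "Y \<subseteq> {0..<1}"
  shows "Tsel a b x ` Y \<in> sets lebesgue \<and> emeasure lebesgue (Tsel a b x ` Y) \<le> emeasure lebesgue Y
         \<and> Tsel a b x ` Y \<subseteq> {0..<1}"
proof (cases x)
  case True
  have eq: "Tsel a b x ` Y = frac ` ((\<lambda>y. y + a) ` Y)"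
    using True by (auto simp: Tsel_def T1_def image_image)
  have "(\<lambda>y. y + a) ` Y \<subseteq> {0..<3}" using Y ab by auto
  then have "frac ` ((\<lambda>y. y + a) ` Y) \<in> sets lebesgue \<and> emeasure lebesgue (frac ` ((\<lambda>y. y + a) ` Y)) \<le> emeasure lebesgue Y"
    using frac_img[OF trans_sets[OF Y(1)]] trans_em by metis
  moreover have "frac ` Z \<subseteq> {0..<1}" for Z by (auto simp: frac_lt_1)
  ultimately show ?thesis unfolding eq by blast
next
  case False
  define Y1 where "Y1 = Y \<inter> {..1 - a}"
  define Y2 where "Y2 = Y \<inter> {1 - a<..}"
  have Ys: "Y1 \<in> sets lebesgue" "Y2 \<in> sets lebesgue" using Y unfolding Y1_def Y2_def by auto
  have eq: "Tsel a b x ` Y = frac ` ((\<lambda>y. y + (a + b)) ` Y1) \<union> frac ` ((\<lambda>y. y + a) ` Y2)"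
    using False unfolding Y1_def Y2_def Tsel_def T2_def
    by (auto simp: image_image add.assoc intro: rev_image_eqI)
  have sub: "(\<lambda>y. y + (a + b)) ` Y1 \<subseteq> {0..<3}" "(\<lambda>y. y + a) ` Y2 \<subseteq> {0..<3}"
    using Y ab unfolding Y1_def Y2_def by auto
  have f1: "frac ` ((\<lambda>y. y + (a + b)) ` Y1) \<in> sets lebesgue \<and> emeasure lebesgue (frac ` ((\<lambda>y. y + (a + b)) ` Y1)) \<le> emeasure lebesgue Y1"
    using frac_img[OF trans_sets[OF Ys(1)] sub(1)] trans_em by metis
  have f2: "frac ` ((\<lambda>y. y + a) ` Y2) \<in> sets lebesgue \<and> emeasure lebesgue (frac ` ((\<lambda>y. y + a) ` Y2)) \<le> emeasure lebesgue Y2"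
    using frac_img[OF trans_sets[OF Ys(2)] sub(2)] trans_em by metis
  have "emeasure lebesgue (Tsel a b x ` Y) \<le> emeasure lebesgue (frac ` ((\<lambda>y. y + (a + b)) ` Y1)) + emeasure lebesgue (frac ` ((\<lambda>y. y + a) ` Y2))"
    unfolding eq using f1 f2 by (intro emeasure_subadditive) auto
  also have "\<dots> \<le> emeasure lebesgue Y1 + emeasure lebesgue Y2" using f1 f2 by (intro add_mono) auto
  also have "\<dots> = emeasure lebesgue (Y1 \<union> Y2)" using Ys by (intro plus_emeasure) (auto simp: Y1_def Y2_def)
  also have "Y1 \<union> Y2 = Y" unfolding Y1_def Y2_def by auto
  finally have "emeasure lebesgue (Tsel a b x ` Y) \<le> emeasure lebesgue Y" .
  moreover have "Tsel a b x ` Y \<in> sets lebesgue" unfolding eq using f1 f2 by auto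
  moreover have "Tsel a b x ` Y \<subseteq> {0..<1}" using False by (auto simp: Tsel_def T2_def frac_lt_1)
  ultimately show ?thesis by blast
qed

lemma Fcomp_img:
  assumes ab: "0 \<le> a" "a < 1" "0 \<le> b" "b < 1"
  shows "Y \<in> sets lebesgue \<Longrightarrow> Y \<subseteq> {0..<1} \<Longrightarrow> Fcomp a b n \<omega> ` Y \<in> sets lebesgue \<and>
     emeasure lebesgue (Fcomp a b n \<omega> ` Y) \<le> emeasure lebesgue Y \<and> Fcomp a b n \<omega> ` Y \<subseteq> {0..<1}"
proof (induction n arbitrary: Y)
  case 0 then show ?case by simp
next
  case (Suc n)
  have T: "Tsel a b (\<omega> n) ` Y \<in> sets lebesgue \<and> emeasure lebesgue (Tsel a b (\<omega> n) ` Y) \<le> emeasure lebesgue Y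
         \<and> Tsel a b (\<omega> n) ` Y \<subseteq> {0..<1}" using Tsel_img[OF ab Suc.prems] .
  have "Fcomp a b (Suc n) \<omega> ` Y = Fcomp a b n \<omega> ` (Tsel a b (\<omega> n) ` Y)" by (simp add: image_comp)
  with Suc.IH[of "Tsel a b (\<omega> n) ` Y"] T show ?case by (metis order_trans)
qed

lemma app_sub: "X \<subseteq> {0..<1} \<Longrightarrow> app a b w X \<subseteq> {0..<1}"
proof (induction w arbitrary: X)
  case Nil then show ?case by simp
next
  case (Cons x w)
  have "Tsel a b x ` X \<subseteq> {0..<1}" by (auto simp: Tsel_def T1_def T2_def frac_lt_1)
  then show ?case using Cons.IH by simp
qed

lemma Fcomp_block:
  assumes "\<forall>i<k. \<omega> (m + i) = v ! i" "k \<le> length v"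
  shows "Fcomp a b (m + k) \<omega> ` X = Fcomp a b m \<omega> ` app a b (rev (take k v)) X"
  using assms
proof (induction k arbitrary: X)
  case 0 then show ?case by simp
next
  case (Suc k)
  have "Fcomp a b (m + Suc k) \<omega> ` X = Fcomp a b (m + k) \<omega> ` (Tsel a b (\<omega> (m + k)) ` X)"
    by (simp add: image_comp)
  also have "\<dots> = Fcomp a b m \<omega> ` app a b (rev (take k v)) (Tsel a b (v ! k) ` X)"
    using Suc by simp
  also have "rev (take (Suc k) v) = v ! k # rev (take k v)"
    using Suc.prems by (simp add: take_Suc_conv_app_nth)
  then have "app a b (rev (take k v)) (Tsel a b (v ! k) ` X) = app a b (rev (take (Suc k) v)) X" by simp
  finally show ?case .
qed

lemma Fcomp_decr:
  assumes "m \<le> n"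
  shows "Fcomp a b n \<omega> ` {0..<1} \<subseteq> Fcomp a b m \<omega> ` {0..<1}"
proof -
  obtain d where n: "n = m + d" using assms le_iff_add by blast
  define v where "v = map (\<lambda>i. \<omega> (m + i)) [0..<d]"
  have "Fcomp a b (m + d) \<omega> ` {0..<1} = Fcomp a b m \<omega> ` app a b (rev (take d v)) {0..<1}"
    by (rule Fcomp_block) (auto simp: v_def)
  also have "\<dots> \<subseteq> Fcomp a b m \<omega> ` {0..<1}" by (intro image_mono app_sub) simp
  finally show ?thesis using n by simp
qed

lemma carc_meas:
  assumes "0 \<le> l" "l < 1"
  shows "carc c l \<in> sets lebesgue \<and> emeasure lebesgue (carc c l) \<le> ennreal l \<and> carc c l \<subseteq> {0..<1}"
proof -
  have e: "carc c l = frac ` {frac c..frac c + l}" using arc_frac[of c l] by (simp add: carc_def)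
  have "{frac c..frac c + l} \<subseteq> {0..<3}"
  proof
    fix x assume "x \<in> {frac c..frac c + l}"
    then have x: "frac c \<le> x" "x \<le> frac c + l" by auto
    have "0 \<le> x" using x(1) frac_ge_0[of c] by linarith
    moreover have "x < 3" using x(2) frac_lt_1[of c] assms by linarith
    ultimately show "x \<in> {0..<3}" by auto
  qed
  moreover have "{frac c..frac c + l} \<in> sets lebesgue" by simp
  ultimately have "carc c l \<in> sets lebesgue \<and> emeasure lebesgue (carc c l) \<le> emeasure lebesgue {frac c..frac c + l}"
    using frac_img[of "{frac c..frac c + l}"] unfolding e by blast
  moreover have h2: "emeasure lebesgue {frac c..frac c + l} = ennreal l" using assms by simp
  moreover have "carc c l \<subseteq> {0..<1}" by (auto simp: carc_def frac_lt_1)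
  ultimately show ?thesis unfolding h2 by blast
qed




lemma occurs:
  fixes p :: real and v :: "bool list"
  assumes p: "0 < p" "p < 1"
  shows "AE \<omega> in sel_space p. \<exists>m. \<forall>i<length v. \<omega> (m + i) = v ! i"
proof (cases "v = []")
  case True then show ?thesis by simp
next
  case False
  define k where "k = length v"
  have k0: "0 < k" using False unfolding k_def by simp
  define N where "N = (\<lambda>_::nat. measure_pmf (bernoulli_pmf p))"
  have M: "sel_space p = PiM UNIV N" unfolding sel_space_def N_def by simp
  interpret PS: product_prob_space N UNIV
    by (rule product_prob_spaceI) (simp add: N_def prob_space_measure_pmf)
  have spaceM: "space (PiM UNIV N) = UNIV" by (simp add: space_PiM N_def)
  have setsN: "sets (N i) = UNIV" for i by (simp add: N_def)
  have rv: "(\<lambda>\<omega>. \<omega> i) \<in> measurable (PiM UNIV N) (N i)" for i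
    by (rule measurable_component_singleton) simp
  have ind: "prob_space.indep_vars (PiM UNIV N) N (\<lambda>i \<omega>. \<omega> i) UNIV"
  proof (subst PS.P.indep_vars_iff_distr_eq_PiM[OF _ rv])
    have "distr (PiM UNIV N) (PiM UNIV N) (\<lambda>x. \<lambda>i\<in>UNIV. x i) = PiM UNIV N"
      by (simp add: restrict_UNIV)
    also have "PiM UNIV N = PiM UNIV (\<lambda>i. distr (PiM UNIV N) (N i) (\<lambda>\<omega>. \<omega> i))"
      by (intro PiM_cong refl PS.PiM_component[symmetric]) simp
    finally show "distr (PiM UNIV N) (PiM UNIV N) (\<lambda>x. \<lambda>i\<in>UNIV. x i) = PiM UNIV (\<lambda>i. distr (PiM UNIV N) (N i) (\<lambda>\<omega>. \<omega> i))" .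
  qed simp
  define K where "K = (\<lambda>r::nat. {r * k..<r * k + k})"
  have disj: "disjoint_family_on K UNIV"
    unfolding disjoint_family_on_def K_def
  proof (intro ballI impI)
    fix m n :: nat assume "m \<noteq> n"
    then have "m < n \<or> n < m" by auto
    then show "{m * k..<m * k + k} \<inter> {n * k..<n * k + k} = {}"
    proof
      assume "m < n" then have "m * k + k \<le> n * k" using k0 by (metis Suc_leI add.commute mult_Suc mult_le_mono1)
      then show ?thesis by auto
    next
      assume "n < m" then have "n * k + k \<le> m * k" using k0 by (metis Suc_leI add.commute mult_Suc mult_le_mono1)
      then show ?thesis by auto
    qed
  qed
  have ind2: "prob_space.indep_vars (PiM UNIV N) (\<lambda>r. PiM (K r) N) (\<lambda>r \<omega>. restrict (\<lambda>i. \<omega> i) (K r)) UNIV"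
    by (rule PS.P.indep_vars_restrict[OF ind _ disj]) simp
  define P where "P = (\<lambda>(r::nat) (x::nat \<Rightarrow> bool). \<forall>i<k. x (r * k + i) = v ! i)"
  have Pset: "{x \<in> space (PiM (K r) N). P r x} = PiE (K r) (\<lambda>j. {v ! (j - r * k)})" for r
  proof (intro equalityI subsetI)
    fix x assume x: "x \<in> {x \<in> space (PiM (K r) N). P r x}"
    show "x \<in> PiE (K r) (\<lambda>j. {v ! (j - r * k)})"
    proof (rule PiE_I)
      fix j assume "j \<in> K r"
      then have "j - r * k < k" "r * k + (j - r * k) = j" unfolding K_def by auto
      then have "x (r * k + (j - r * k)) = v ! (j - r * k)" using x unfolding P_def by blast
      then show "x j \<in> {v ! (j - r * k)}" using \<open>r * k + (j - r * k) = j\<close> by simp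
    next
      fix j assume "j \<notin> K r"
      then show "x j = undefined" using x by (auto simp: space_PiM PiE_def extensional_def)
    qed
  next
    fix x assume x: "x \<in> PiE (K r) (\<lambda>j. {v ! (j - r * k)})"
    then have "x \<in> space (PiM (K r) N)" by (auto simp: space_PiM N_def PiE_def Pi_def)
    moreover have "P r x" unfolding P_def
    proof (intro allI impI)
      fix i assume "i < k"
      then have "r * k + i \<in> K r" unfolding K_def by auto
      then show "x (r * k + i) = v ! i" using x by (auto simp: PiE_def Pi_def)
    qed
    ultimately show "x \<in> {x \<in> space (PiM (K r) N). P r x}" by simp
  qed
  have Psets: "{x \<in> space (PiM (K r) N). P r x} \<in> sets (PiM (K r) N)" for r
    unfolding Pset by (rule sets_PiM_I_finite) (auto simp: K_def setsN)
  define E where "E = (\<lambda>r. {\<omega> \<in> space (PiM UNIV N). P r (restrict (\<lambda>i. \<omega> i) (K r))})"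
  have indE: "prob_space.indep_events (PiM UNIV N) E UNIV"
    unfolding E_def by (rule PS.P.indep_eventsI_indep_vars[OF ind2 Psets])
  have Esets: "E r \<in> sets (PiM UNIV N)" for r using indE unfolding PS.P.indep_events_def by auto
  have Eeq: "E r = PS.emb UNIV (K r) (PiE (K r) (\<lambda>j. {v ! (j - r * k)}))" for r
  proof -
    have "E r = {\<omega>. \<forall>i<k. \<omega> (r * k + i) = v ! i}"
      unfolding E_def P_def K_def by (auto simp: spaceM)
    also have "\<dots> = PS.emb UNIV (K r) (PiE (K r) (\<lambda>j. {v ! (j - r * k)}))"
    proof (intro equalityI subsetI)
      fix x assume x: "x \<in> {\<omega>. \<forall>i<k. \<omega> (r * k + i) = v ! i}"
      have "restrict x (K r) \<in> PiE (K r) (\<lambda>j. {v ! (j - r * k)})"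
      proof (rule PiE_I)
        fix j assume "j \<in> K r"
        then have "j - r * k < k" "r * k + (j - r * k) = j" unfolding K_def by auto
        then have "x (r * k + (j - r * k)) = v ! (j - r * k)" using x by blast
        then show "restrict x (K r) j \<in> {v ! (j - r * k)}" using \<open>r * k + (j - r * k) = j\<close> \<open>j \<in> K r\<close> by simp
      qed simp
      then show "x \<in> PS.emb UNIV (K r) (PiE (K r) (\<lambda>j. {v ! (j - r * k)}))"
        by (simp add: prod_emb_def spaceM N_def space_PiM)
    next
      fix x assume "x \<in> PS.emb UNIV (K r) (PiE (K r) (\<lambda>j. {v ! (j - r * k)}))"
      then have x: "restrict x (K r) \<in> PiE (K r) (\<lambda>j. {v ! (j - r * k)})" by (simp add: prod_emb_def)
      show "x \<in> {\<omega>. \<forall>i<k. \<omega> (r * k + i) = v ! i}"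
      proof (intro CollectI allI impI)
        fix i assume "i < k"
        then have "r * k + i \<in> K r" unfolding K_def by auto
        then show "x (r * k + i) = v ! i" using x by (auto simp: PiE_def Pi_def)
      qed
    qed
    finally show ?thesis .
  qed
  define q where "q = min p (1 - p) ^ k"
  have q0: "0 < q" unfolding q_def using p by simp
  have probE: "q \<le> measure (PiM UNIV N) (E r)" for r
  proof -
    have "emeasure (PiM UNIV N) (E r) = (\<Prod>j\<in>K r. emeasure (N j) {v ! (j - r * k)})"
      unfolding Eeq by (rule PS.emeasure_PiM_emb) (auto simp: K_def setsN)
    also have "\<dots> = (\<Prod>j\<in>K r. ennreal (pmf (bernoulli_pmf p) (v ! (j - r * k))))"
      by (simp add: N_def emeasure_pmf_single)
    also have "\<dots> = ennreal (\<Prod>j\<in>K r. pmf (bernoulli_pmf p) (v ! (j - r * k)))"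
      by (simp add: prod_ennreal)
    finally have e: "measure (PiM UNIV N) (E r) = (\<Prod>j\<in>K r. pmf (bernoulli_pmf p) (v ! (j - r * k)))"
      by (simp add: PS.P.emeasure_eq_measure prod_nonneg)
    have "(\<Prod>j\<in>K r. min p (1 - p)) \<le> (\<Prod>j\<in>K r. pmf (bernoulli_pmf p) (v ! (j - r * k)))"
    proof (rule prod_mono)
      fix j
      have "min p (1 - p) \<le> pmf (bernoulli_pmf p) b" for b using p by (cases b) auto
      then show "0 \<le> min p (1 - p) \<and> min p (1 - p) \<le> pmf (bernoulli_pmf p) (v ! (j - r * k))"
        using p by auto
    qed
    moreover have "(\<Prod>j\<in>K r. min p (1 - p)) = q" by (simp add: q_def K_def)
    ultimately show ?thesis using e by simp
  qed
  define U where "U = (\<lambda>n. \<Union>m\<in>{n..}. E m)"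
  have Usets: "range U \<subseteq> sets (PiM UNIV N)" unfolding U_def using Esets by auto
  have Udec: "decseq U" unfolding U_def decseq_def by (auto, meson atLeast_iff order_trans)
  have lim: "(\<lambda>n. measure (PiM UNIV N) (U n)) \<longlonglongrightarrow> measure (PiM UNIV N) (\<Inter>n. U n)"
    by (rule PS.P.finite_Lim_measure_decseq[OF Usets Udec])
  have "q \<le> measure (PiM UNIV N) (U n)" for n
  proof -
    have "E n \<subseteq> U n" unfolding U_def by auto
    then have "measure (PiM UNIV N) (E n) \<le> measure (PiM UNIV N) (U n)" using Usets by (intro PS.P.finite_measure_mono) auto
    with probE[of n] show ?thesis by simp
  qed
  then have "q \<le> measure (PiM UNIV N) (\<Inter>n. U n)" by (intro LIMSEQ_le_const[OF lim]) auto
  moreover have "measure (PiM UNIV N) (\<Inter>n. U n) = 0 \<or> measure (PiM UNIV N) (\<Inter>n. U n) = 1"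
    using PS.P.borel_0_1_law[OF indE] unfolding U_def by simp
  ultimately have "measure (PiM UNIV N) (\<Inter>n. U n) = 1" using q0 by auto
  then have "AE \<omega> in PiM UNIV N. \<omega> \<in> (\<Inter>n. U n)" by (rule PS.P.AE_prob_1)
  then have "AE \<omega> in PiM UNIV N. \<exists>m. \<forall>i<length v. \<omega> (m + i) = v ! i"
  proof (rule AE_mp, intro AE_I2 impI)
    fix \<omega> assume "\<omega> \<in> (\<Inter>n. U n)"
    then obtain r where "\<omega> \<in> E r" unfolding U_def by auto
    then have "\<forall>i<k. \<omega> (r * k + i) = v ! i" unfolding Eeq[of r, symmetric] E_def P_def K_def by auto
    then show "\<exists>m. \<forall>i<length v. \<omega> (m + i) = v ! i" unfolding k_def by blast
  qed
  then show ?thesis unfolding M .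
qed




theorem theorem4p2:
  fixes \<alpha> :: real
  assumes "0 < \<alpha>" and "\<alpha> < 1" and "\<alpha> \<notin> \<rat>"
  shows "\<exists>\<beta>0>0. \<forall>\<beta> p. 0 < \<beta> \<and> \<beta> < \<beta>0 \<and> \<beta> \<notin> \<rat> \<and> 0 < p \<and> p < 1 \<longrightarrow>
           (AE \<omega> in sel_space p.
              (\<forall>n. Fcomp \<alpha> \<beta> n \<omega> ` {0..<1} \<in> sets lebesgue) \<and>
              (\<lambda>n. measure lebesgue (Fcomp \<alpha> \<beta> n \<omega> ` {0..<1})) \<longlonglongrightarrow> 0)"
proof (intro exI[of _ "min \<alpha> (1 - \<alpha>) / 4"] conjI allI impI)
  show "0 < min \<alpha> (1 - \<alpha>) / 4" using assms by simp
  fix \<beta> p :: real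
  assume h: "0 < \<beta> \<and> \<beta> < min \<alpha> (1 - \<alpha>) / 4 \<and> \<beta> \<notin> \<rat> \<and> 0 < p \<and> p < 1"
  interpret drs \<alpha> \<beta>
    by unfold_locales (use assms h in auto)
  have ab: "0 \<le> \<alpha>" "\<alpha> < 1" "0 \<le> \<beta>" "\<beta> < 1" using assms h by auto
  define S :: "real set" where "S = {0..<1}"
  have Ssets: "S \<in> sets lebesgue" "S \<subseteq> {0..<1}" unfolding S_def by auto
  have "\<forall>N::nat. \<exists>w c l. l < inverse (real (Suc N)) \<and> app \<alpha> \<beta> w {0..<1} \<subseteq> carc c l"
    using det by simp
  then obtain W C Lf where WCL: "\<And>N. Lf N < inverse (real (Suc N))" "\<And>N. app \<alpha> \<beta> (W N) {0..<1} \<subseteq> carc (C N) (Lf N)"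
    by metis
  define L0 where "L0 = (\<lambda>N. max (Lf N) 0)"
  have L0: "0 \<le> L0 N" "L0 N < 1" "L0 N < inverse (real (Suc N))" for N
  proof -
    have "inverse (real (Suc N)) \<le> 1" by (simp add: field_simps)
    then show "0 \<le> L0 N" "L0 N < 1" "L0 N < inverse (real (Suc N))" using WCL(1)[of N] unfolding L0_def by auto
  qed
  have WCL2: "app \<alpha> \<beta> (W N) S \<subseteq> carc (C N) (L0 N)" for N
    using WCL(2)[of N] arc_mono[of "Lf N" "L0 N" "C N"] unfolding S_def L0_def by auto
  have AEocc: "AE \<omega> in sel_space p. \<forall>N. \<exists>m. \<forall>i<length (rev (W N)). \<omega> (m + i) = rev (W N) ! i"
    unfolding AE_all_countable using occurs h by blast
  show "AE \<omega> in sel_space p.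
              (\<forall>n. Fcomp \<alpha> \<beta> n \<omega> ` {0..<1} \<in> sets lebesgue) \<and>
              (\<lambda>n. measure lebesgue (Fcomp \<alpha> \<beta> n \<omega> ` {0..<1})) \<longlonglongrightarrow> 0"
  proof (rule AE_mp[OF AEocc], intro AE_I2 impI conjI allI)
    fix \<omega> :: "nat \<Rightarrow> bool" and n
    show "Fcomp \<alpha> \<beta> n \<omega> ` {0..<1} \<in> sets lebesgue"
      using Fcomp_img[OF ab Ssets] unfolding S_def by blast
  next
    fix \<omega> :: "nat \<Rightarrow> bool"
    assume occ: "\<forall>N. \<exists>m. \<forall>i<length (rev (W N)). \<omega> (m + i) = rev (W N) ! i"
    show "(\<lambda>n. measure lebesgue (Fcomp \<alpha> \<beta> n \<omega> ` {0..<1})) \<longlonglongrightarrow> 0"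
    proof (rule LIMSEQ_I)
      fix r :: real assume r: "0 < r"
      obtain n1 :: nat where n1: "0 < n1" "inverse (real n1) < r" using ex_inverse_of_nat_less[OF r] by blast
      define N where "N = n1 - 1"
      have NN: "real (Suc N) = real n1" using n1 unfolding N_def by simp
      obtain m where m: "\<forall>i<length (rev (W N)). \<omega> (m + i) = rev (W N) ! i" using occ by blast
      define k where "k = length (W N)"
      have blk: "Fcomp \<alpha> \<beta> (m + k) \<omega> ` S = Fcomp \<alpha> \<beta> m \<omega> ` app \<alpha> \<beta> (W N) S"
        using Fcomp_block[of k \<omega> m "rev (W N)" \<alpha> \<beta> S] m unfolding k_def by simp
      have cm: "carc (C N) (L0 N) \<in> sets lebesgue \<and> emeasure lebesgue (carc (C N) (L0 N)) \<le> ennreal (L0 N)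
          \<and> carc (C N) (L0 N) \<subseteq> {0..<1}" using carc_meas[OF L0(1,2)] .
      have Fc: "Fcomp \<alpha> \<beta> m \<omega> ` carc (C N) (L0 N) \<in> sets lebesgue \<and>
          emeasure lebesgue (Fcomp \<alpha> \<beta> m \<omega> ` carc (C N) (L0 N)) \<le> emeasure lebesgue (carc (C N) (L0 N))"
        using Fcomp_img[OF ab, of "carc (C N) (L0 N)" m \<omega>] cm by blast
      show "\<exists>no. \<forall>n\<ge>no. norm (measure lebesgue (Fcomp \<alpha> \<beta> n \<omega> ` {0..<1}) - 0) < r"
      proof (intro exI[of _ "m + k"] allI impI)
        fix n assume "m + k \<le> n"
        then have "Fcomp \<alpha> \<beta> n \<omega> ` S \<subseteq> Fcomp \<alpha> \<beta> (m + k) \<omega> ` S"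
          unfolding S_def by (rule Fcomp_decr)
        also have "\<dots> \<subseteq> Fcomp \<alpha> \<beta> m \<omega> ` carc (C N) (L0 N)"
          unfolding blk by (intro image_mono WCL2)
        finally have sub: "Fcomp \<alpha> \<beta> n \<omega> ` S \<subseteq> Fcomp \<alpha> \<beta> m \<omega> ` carc (C N) (L0 N)" .
        have "emeasure lebesgue (Fcomp \<alpha> \<beta> n \<omega> ` S) \<le> emeasure lebesgue (Fcomp \<alpha> \<beta> m \<omega> ` carc (C N) (L0 N))"
          using Fc sub by (intro emeasure_mono) auto
        also have "\<dots> \<le> ennreal (L0 N)" using Fc cm by (meson order_trans)
        finally have "measure lebesgue (Fcomp \<alpha> \<beta> n \<omega> ` S) \<le> L0 N"
          unfolding measure_def using L0(1) by (intro enn2real_leI)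
        moreover have "L0 N < r" using L0(3)[of N] n1 NN by simp
        moreover have "0 \<le> measure lebesgue (Fcomp \<alpha> \<beta> n \<omega> ` S)" by simp
        ultimately show "norm (measure lebesgue (Fcomp \<alpha> \<beta> n \<omega> ` {0..<1}) - 0) < r"
          unfolding S_def by simp
      qed
    qed
  qed
qed


end
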